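(* For the symmetric-key scheme $\mathsf{LWE\text{-}SKE}(n,q,\chi)$, there is a quantum algorithm that makes one quantum query to the decryption function $\mathsf{Dec}_{\mathbf k}$ and recovers the entire key $\mathbf k$ with probability at least $4/\pi^2-o(1)$.
   Context: $\mathsf{LWE\text{-}SKE}(n,q,\chi)$, for integers $n\ge1$, $q\ge2$ and a discrete symmetric error distribution $\chi$ on $\mathbb Z_q$: $\mathsf{KeyGen}$ outputs uniform $\mathbf k\in\mathbb Z_q^n$; to encrypt $b\in\{0,1\}$, sample uniform $\mathbf a\in\mathbb Z_q^n$ and $e\leftarrow\chi$ and output $(\mathbf a,\langle\mathbf a,\mathbf k\rangle+b\lfloor q/2\rfloor+e)$; $\mathsf{Dec}_{\mathbf k}(\mathbf a,c)$ outputs $0$ if $|c-\langle\mathbf a,\mathbf k\rangle|\le\lfloor q/4\rfloor$ and $1$ otherwise (inner products mod $q$, $|\cdot|$ the absolute value of the representative of least absolute value). A quantum query to $\mathsf{Dec}_{\mathbf k}$ means one application of the unitary $|\mathbf a,c\rangle|y\rangle\mapsto|\mathbf a,c\rangle|y\oplus\mathsf{Dec}_{\mathbf k}(\mathbf a,c)\rangle$ on arbitrary superpositions of ciphertexts $(\mathbf a,c)\in\mathbb Z_q^{n+1}$. *)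

theory Defs
  imports "HOL-Analysis.Analysis" "HOL-Library.FuncSet"
begin

text \<open>Elements of Z_q^n: extensional functions on {0..<n} with values in {0..<q}.\<close>
definition zq_vecs :: "nat \<Rightarrow> nat \<Rightarrow> (nat \<Rightarrow> int) set" where
  "zq_vecs n q = ({0..<n} \<rightarrow>\<^sub>E {0..<int q})"

definition ip_mod :: "nat \<Rightarrow> nat \<Rightarrow> (nat \<Rightarrow> int) \<Rightarrow> (nat \<Rightarrow> int) \<Rightarrow> int" where
  "ip_mod n q a k = (\<Sum>i<n. a i * k i) mod int q"

text \<open>Absolute value of the representative of least absolute value of x mod q.\<close>
definition cabs :: "nat \<Rightarrow> int \<Rightarrow> int" where
  "cabs q x = min (x mod int q) (int q - x mod int q)"

text \<open>LWE-SKE decryption; True encodes the bit 1, False the bit 0.\<close>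
definition lwe_dec :: "nat \<Rightarrow> nat \<Rightarrow> (nat \<Rightarrow> int) \<Rightarrow> (nat \<Rightarrow> int) \<times> int \<Rightarrow> bool" where
  "lwe_dec n q k ac = (cabs q (snd ac - ip_mod n q (fst ac) k) > int q div 4)"

text \<open>Computational basis of the algorithm's register: a ciphertext register (a,c) in Z_q^(n+1),
  the one-qubit answer register y, and a workspace register with m basis states.\<close>
type_synonym basis = "((nat \<Rightarrow> int) \<times> int) \<times> bool \<times> nat"

definition qbasis :: "nat \<Rightarrow> nat \<Rightarrow> nat \<Rightarrow> basis set" where
  "qbasis n q m = (zq_vecs n q \<times> {0..<int q}) \<times> UNIV \<times> {0..<m}"

definition unit_state :: "basis set \<Rightarrow> (basis \<Rightarrow> complex) \<Rightarrow> bool" where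
  "unit_state B \<psi> \<longleftrightarrow> (\<forall>x. x \<notin> B \<longrightarrow> \<psi> x = 0) \<and> (\<Sum>x\<in>B. (cmod (\<psi> x))^2) = 1"

text \<open>A unitary operator on the span of B, given by its matrix U x y = <x|U|y>.\<close>
definition unitary_on :: "basis set \<Rightarrow> (basis \<Rightarrow> basis \<Rightarrow> complex) \<Rightarrow> bool" where
  "unitary_on B U \<longleftrightarrow>
     (\<forall>x\<in>B. \<forall>z\<in>B. (\<Sum>y\<in>B. cnj (U y x) * U y z) = (if x = z then 1 else 0))"

definition apply_op :: "basis set \<Rightarrow> (basis \<Rightarrow> basis \<Rightarrow> complex) \<Rightarrow> (basis \<Rightarrow> complex) \<Rightarrow> (basis \<Rightarrow> complex)" where
  "apply_op B U \<psi> = (\<lambda>x. if x \<in> B then (\<Sum>y\<in>B. U x y * \<psi> y) else 0)"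

text \<open>One quantum query to Dec_k: |a,c>|y>|w> \<mapsto> |a,c>|y xor Dec_k(a,c)>|w>.
  This permutation is an involution, so the image state is psi composed with it.\<close>
definition dec_oracle :: "nat \<Rightarrow> nat \<Rightarrow> (nat \<Rightarrow> int) \<Rightarrow> (basis \<Rightarrow> complex) \<Rightarrow> (basis \<Rightarrow> complex)" where
  "dec_oracle n q k \<psi> = (\<lambda>(ac, y, w). \<psi> (ac, y \<noteq> lwe_dec n q k ac, w))"

text \<open>A one-query quantum algorithm: start in (any k-independent) unit state psi, make one
  query to Dec_k, apply a unitary U, measure in the computational basis, and output out(x).\<close>
definition success_prob ::
  "nat \<Rightarrow> nat \<Rightarrow> nat \<Rightarrow> (basis \<Rightarrow> complex) \<Rightarrow> (basis \<Rightarrow> basis \<Rightarrow> complex)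
     \<Rightarrow> (basis \<Rightarrow> (nat \<Rightarrow> int)) \<Rightarrow> (nat \<Rightarrow> int) \<Rightarrow> real" where
  "success_prob n q m \<psi> U out k =
     (\<Sum>x\<in>{x\<in>qbasis n q m. out x = k}.
        (cmod (apply_op (qbasis n q m) U (dec_oracle n q k \<psi>) x))^2)"

end

theory Submission
  imports Defs
begin

definition ee :: "nat \<Rightarrow> int \<Rightarrow> complex" where
  "ee q t = cis (2 * pi * of_int t / of_nat q)"

lemma ee_add: "ee q (a+b) = ee q a * ee q b"
  by (simp add: ee_def cis_mult add_divide_distrib distrib_left)

lemma ee_cnj: "cnj (ee q t) = ee q (-t)"
  by (simp add: ee_def cis_cnj)

lemma ee_norm[simp]: "norm (ee q t) = 1"
  by (simp add: ee_def)

lemma ee_mult_q: "q > 0 \<Longrightarrow> ee q (int q * s) = 1"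
proof -
  assume "q > 0"
  then have "2 * pi * of_int (int q * s) / of_nat q = 2 * pi * of_int s" by simp
  then show ?thesis unfolding ee_def by (simp add: Ints_of_int)
qed

lemma ee_mod: "q > 0 \<Longrightarrow> ee q (t mod int q) = ee q t"
proof -
  assume q: "q > 0"
  have "t = t mod int q + int q * (t div int q)" by simp
  then have "ee q t = ee q (t mod int q) * ee q (int q * (t div int q))"
    by (metis ee_add)
  with ee_mult_q[OF q] show ?thesis by simp
qed

lemma ee_eq_1: "q > 0 \<Longrightarrow> ee q d = 1 \<longleftrightarrow> d mod int q = 0"
proof
  assume q: "q > 0" and "ee q d = 1"
  then obtain n where n: "2 * pi * of_int d / of_nat q = of_int (2 * n) * pi"
    unfolding ee_def cis_conv_exp exp_eq_1 by auto
  then have "real_of_int d = of_int n * of_nat q" using q by (simp add: field_simps)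
  then have "d = n * int q" by (metis of_int_eq_iff of_int_mult of_int_of_nat_eq)
  then show "d mod int q = 0" by simp
next
  assume q: "q > 0" and "d mod int q = 0"
  then have "d = int q * (d div int q)" by auto
  then have "ee q d = ee q (int q * (d div int q))" by (rule arg_cong)
  then show "ee q d = 1" using ee_mult_q[OF q] by simp
qed

lemma sum_int_range: "(\<Sum>u\<in>{0..<int q}. f u) = (\<Sum>u<q. f (int u))"
proof -
  have "{0..<int q} = int ` {0..<q}" by (simp add: image_int_atLeastLessThan)
  then have "{0..<int q} = int ` {..<q}" by (simp add: atLeast0LessThan)
  then show ?thesis by (simp add: sum.reindex)
qed

lemma geom_ee: assumes q: "q > 0"
  shows "(\<Sum>u\<in>{0..<int q}. ee q (u*d)) = (if d mod int q = 0 then of_nat q else 0)"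
proof -
  have pw: "ee q (int u * d) = ee q d ^ u" for u
  proof -
    have "ee q d ^ u = cis (real u * (2 * pi * of_int d / of_nat q))" unfolding ee_def by (rule Complex.DeMoivre)
    moreover have "real u * (2 * pi * of_int d / of_nat q) = 2 * pi * of_int (int u * d) / of_nat q" by simp
    ultimately show ?thesis unfolding ee_def by (simp add: ac_simps)
  qed
  have "(\<Sum>u\<in>{0..<int q}. ee q (u*d)) = (\<Sum>u<q. ee q d ^ u)"
    by (simp add: sum_int_range pw)
  also have "\<dots> = (if d mod int q = 0 then of_nat q else 0)"
  proof (cases "d mod int q = 0")
    case True
    then have "ee q d = 1" using ee_eq_1[OF q] by simp
    then show ?thesis using True by simp
  next
    case False
    then have "ee q d \<noteq> 1" using ee_eq_1[OF q] by simp
    moreover have "ee q d ^ q = 1" using pw[of q] ee_mult_q[OF q, of d] by (simp add: mult.commute)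
    ultimately show ?thesis using False by (simp add: geometric_sum)
  qed
  finally show ?thesis .
qed


lemma bij_mod_shift:
  assumes q: "q > (0::int)"
  shows "bij_betw (\<lambda>x. (x + s) mod q) {t..<t + q} {0..<q}"
proof (rule bij_betwI')
  fix x y assume x: "x \<in> {t..<t + q}" and y: "y \<in> {t..<t + q}"
  show "((x + s) mod q = (y + s) mod q) = (x = y)"
  proof
    assume "(x + s) mod q = (y + s) mod q"
    then have "q dvd (x - y)" by (metis mod_eq_dvd_iff add_diff_cancel_right)
    then obtain k where k: "x - y = q * k" by auto
    have "\<bar>x - y\<bar> < q" using x y by auto
    moreover have "\<bar>x - y\<bar> = q * \<bar>k\<bar>" using k q by (simp add: abs_mult)
    ultimately have "q * \<bar>k\<bar> < q * 1" by simp
    then have "\<bar>k\<bar> < 1" using q by (simp only: mult_less_cancel_left_pos)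
    then have "k = 0" by simp
    then show "x = y" using k by simp
  qed simp
next
  fix x assume "x \<in> {t..<t + q}" then show "(x + s) mod q \<in> {0..<q}" using q by simp
next
  fix y assume y: "y \<in> {0..<q}"
  let ?x = "t + (y - s - t) mod q"
  have "?x \<in> {t..<t + q}" using q by simp
  moreover have "y = (?x + s) mod q"
  proof -
    have "(?x + s) mod q = ((t + s) + (y - s - t) mod q) mod q" by (simp only: ac_simps)
    also have "\<dots> = (t + s + (y - s - t)) mod q" by (rule mod_add_right_eq)
    finally have "(?x + s) mod q = (t + s + (y - s - t)) mod q" .
    also have "\<dots> = y mod q" by simp
    finally show ?thesis using y by simp
  qed
  ultimately show "\<exists>x\<in>{t..<t + q}. y = (x + s) mod q" by blast
qed

lemma sum_mod_shift:
  fixes H :: "int \<Rightarrow> 'a::comm_monoid_add"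
  assumes q: "q > (0::int)" and per: "\<And>x. H (x mod q) = H x"
  shows "(\<Sum>x\<in>{t..<t + q}. H (x + s)) = (\<Sum>x\<in>{0..<q}. H x)"
proof -
  have "(\<Sum>x\<in>{t..<t + q}. H ((x + s) mod q)) = (\<Sum>x\<in>{0..<q}. H x)"
    by (rule sum.reindex_bij_betw[OF bij_mod_shift[OF q]])
  then show ?thesis by (simp add: per)
qed

lemma ee_sum: "ee q (sum f A) = (\<Prod>i\<in>A. ee q (f i))"
proof (cases "finite A")
  case True then show ?thesis
  proof (induction A rule: finite_induct)
    case empty then show ?case by (simp add: ee_def)
  next
    case (insert x F) then show ?case by (simp add: ee_add)
  qed
next
  case False then show ?thesis by (simp add: ee_def)
qed

lemma orth_vec:
  assumes q: "q > 0" and a: "a \<in> zq_vecs n q" and a': "a' \<in> zq_vecs n q"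
  shows "(\<Sum>u\<in>zq_vecs n q. ee q (\<Sum>i<n. u i * (a i - a' i))) = (if a = a' then of_nat q ^ n else 0)"
proof -
  have "(\<Sum>u\<in>zq_vecs n q. ee q (\<Sum>i<n. u i * (a i - a' i)))
      = (\<Sum>u\<in>PiE {0..<n} (\<lambda>_. {0..<int q}). \<Prod>i\<in>{0..<n}. ee q (u i * (a i - a' i)))"
    by (simp add: zq_vecs_def ee_sum atLeast0LessThan)
  also have "\<dots> = (\<Prod>i\<in>{0..<n}. \<Sum>y\<in>{0..<int q}. ee q (y * (a i - a' i)))"
    by (rule prod_sum_PiE[symmetric]) auto
  also have "\<dots> = (\<Prod>i\<in>{0..<n}. if (a i - a' i) mod int q = 0 then of_nat q else 0)"
    by (simp add: geom_ee[OF q])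
  also have "\<dots> = (if a = a' then of_nat q ^ n else 0)"
  proof (cases "a = a'")
    case True then show ?thesis by simp
  next
    case False
    then obtain i where i: "i \<in> {0..<n}" "a i \<noteq> a' i"
      using PiE_ext[of a "{0..<n}" "\<lambda>_. {0..<int q}" a'] a a' unfolding zq_vecs_def by blast
    have "a i \<in> {0..<int q}" "a' i \<in> {0..<int q}" using a a' i(1) unfolding zq_vecs_def by auto
    have "(a i - a' i) mod int q \<noteq> 0"
    proof
      assume "(a i - a' i) mod int q = 0"
      then have "a i mod int q = a' i mod int q" by (simp add: mod_eq_dvd_iff dvd_eq_mod_eq_0)
      moreover have "a i mod int q = a i" "a' i mod int q = a' i"
        using \<open>a i \<in> _\<close> \<open>a' i \<in> _\<close> by auto
      ultimately show False using i(2) by simp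
    qed
    then show ?thesis using False i(1) by (auto intro!: prod_zero)
  qed
  finally show ?thesis .
qed


lemma dirichlet:
  fixes \<theta> :: real
  shows "sin (\<theta> / 2) * (\<Sum>x\<in>{-int L..int L}. cos (of_int x * \<theta>)) = sin ((2 * real L + 1) * \<theta> / 2)"
proof (induction L)
  case 0 show ?case by simp
next
  case (Suc L)
  have set: "{-int (Suc L)..int (Suc L)} = insert (-(int L + 1)) (insert (int L + 1) {-int L..int L})"
    by auto
  have "(\<Sum>x\<in>{-int (Suc L)..int (Suc L)}. cos (of_int x * \<theta>))
       = 2 * cos ((real L + 1) * \<theta>) + (\<Sum>x\<in>{-int L..int L}. cos (of_int x * \<theta>))"
  proof -
    have "(- real L - 1) * \<theta> = -((real L + 1) * \<theta>)" by (simp add: algebra_simps)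
    then have cm: "cos ((- real L - 1) * \<theta>) = cos ((real L + 1) * \<theta>)" by simp
    show ?thesis unfolding set by (simp add: cm)
  qed
  moreover have "sin (\<theta> / 2) * (2 * cos ((real L + 1) * \<theta>))
      = sin ((2 * real (Suc L) + 1) * \<theta> / 2) - sin ((2 * real L + 1) * \<theta> / 2)"
  proof -
    have "sin ((2 * real (Suc L) + 1) * \<theta> / 2) - sin ((2 * real L + 1) * \<theta> / 2)
       = 2 * sin (((2 * real (Suc L) + 1) * \<theta> / 2 - (2 * real L + 1) * \<theta> / 2) / 2)
           * cos (((2 * real (Suc L) + 1) * \<theta> / 2 + (2 * real L + 1) * \<theta> / 2) / 2)"
      by (rule sin_diff_sin)
    also have "\<dots> = 2 * sin (\<theta> / 2) * cos ((real L + 1) * \<theta>)"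
    proof -
      have e1: "((2 * real (Suc L) + 1) * \<theta> / 2 - (2 * real L + 1) * \<theta> / 2) / 2 = \<theta> / 2"
        by (simp add: field_simps)
      have e2: "((2 * real (Suc L) + 1) * \<theta> / 2 + (2 * real L + 1) * \<theta> / 2) / 2 = (real L + 1) * \<theta>"
        by (simp add: field_simps)
      show ?thesis by (simp only: e1 e2)
    qed
    finally show ?thesis by simp
  qed
  ultimately show ?case using Suc.IH by (simp add: distrib_left)
qed

definition Gs :: "nat \<Rightarrow> int \<Rightarrow> complex" where
  "Gs q x = (if cabs q x > int q div 4 then -1 else 1)"

definition Tq :: "nat \<Rightarrow> complex" where
  "Tq q = (\<Sum>x\<in>{0..<int q}. ee q x * Gs q x)"

lemma cabs_mod: "cabs q (x mod int q) = cabs q x" by (simp add: cabs_def)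

lemma cabs_range:
  assumes q: "q \<ge> 2" and x1: "- (int q div 4) \<le> x" and x2: "x < int q - int q div 4"
  shows "cabs q x \<le> int q div 4 \<longleftrightarrow> x \<le> int q div 4"
proof (cases "x \<ge> 0")
  case True
  then have "x mod int q = x" using x2 by (simp add: mod_pos_pos_trivial)
  then show ?thesis using x2 unfolding cabs_def by auto
next
  case False
  have "(x + int q) mod int q = x + int q" using False x1 q by (intro mod_pos_pos_trivial) auto
  then have "x mod int q = x + int q" by simp
  then show ?thesis using False x1 q unfolding cabs_def by auto
qed

lemma T_bound:
  assumes q: "q \<ge> 2"
  shows "2 * cos (pi / q) / pi \<le> Re (Tq q) / q"
proof -
  define L where "L = int q div 4"
  have L0: "L \<ge> 0" and L1: "2 * L + 1 \<le> int q" and L2: "int q - 3 \<le> 4 * L" "4 * L \<le> int q"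
    unfolding L_def using q by auto
  define Ln where "Ln = q div 4"
  have LLn: "L = int Ln" unfolding L_def Ln_def by (simp add: zdiv_int)
  have qpos: "int q > 0" using q by simp
  have per: "ee q (x mod int q) * Gs q (x mod int q) = ee q x * Gs q x" for x
    using q by (simp add: ee_mod Gs_def cabs_mod)
  have "Tq q = (\<Sum>x\<in>{-L..<-L + int q}. ee q (x + 0) * Gs q (x + 0))"
  proof -
    have "(\<Sum>x\<in>{-L..<-L + int q}. ee q (x + 0) * Gs q (x + 0)) = (\<Sum>x\<in>{0..<int q}. ee q x * Gs q x)"
      by (rule sum_mod_shift[OF qpos, where H = "\<lambda>x. ee q x * Gs q x"]) (rule per)
    then show ?thesis unfolding Tq_def by simp
  qed
  also have "\<dots> = (\<Sum>x\<in>{-L..<-L + int q}. 2 * (if x \<le> L then ee q x else 0) - ee q x)"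
  proof (rule sum.cong)
    fix x assume x: "x \<in> {-L..<-L + int q}"
    then have "cabs q x \<le> L \<longleftrightarrow> x \<le> L" using cabs_range[OF q, of x] unfolding L_def by auto
    then show "ee q (x + 0) * Gs q (x + 0) = 2 * (if x \<le> L then ee q x else 0) - ee q x"
      unfolding Gs_def L_def by auto
  qed simp
  also have "\<dots> = 2 * (\<Sum>x\<in>{-L..<-L + int q}. (if x \<le> L then ee q x else 0)) - (\<Sum>x\<in>{-L..<-L + int q}. ee q x)"
    by (simp add: sum_subtractf sum_distrib_left)
  also have "(\<Sum>x\<in>{-L..<-L + int q}. (if x \<le> L then ee q x else 0)) = (\<Sum>x\<in>{-L..L}. ee q x)"
  proof -
    have "(\<Sum>x\<in>{-L..<-L + int q}. (if x \<le> L then ee q x else 0)) = sum (ee q) {x\<in>{-L..<-L + int q}. x \<le> L}"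
      by (rule sum.inter_filter[symmetric]) simp
    also have "{x\<in>{-L..<-L + int q}. x \<le> L} = {-L..L}" using L1 by auto
    finally show ?thesis .
  qed
  also have "(\<Sum>x\<in>{-L..<-L + int q}. ee q x) = 0"
  proof -
    have "(\<Sum>x\<in>{-L..<-L + int q}. ee q (x + 0)) = (\<Sum>x\<in>{0..<int q}. ee q x)"
      by (rule sum_mod_shift[OF qpos]) (rule ee_mod, use q in simp)
    also have "\<dots> = (\<Sum>x\<in>{0..<int q}. ee q (x * 1))" by simp
    also have "\<dots> = 0" using q by (subst geom_ee) auto
    finally show ?thesis by simp
  qed
  finally have T: "Tq q = 2 * (\<Sum>x\<in>{-L..L}. ee q x)" by simp
  define \<theta> where "\<theta> = 2 * pi / q"
  define D where "D = (\<Sum>x\<in>{-L..L}. cos (of_int x * \<theta>))"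
  have ReT: "Re (Tq q) = 2 * D"
    unfolding T D_def \<theta>_def by (simp add: Re_sum ee_def algebra_simps)
  have dir: "sin (pi / q) * D = sin ((2 * real Ln + 1) * pi / q)"
    using dirichlet[of \<theta> Ln] unfolding D_def \<theta>_def LLn by simp
  define \<sigma> where "\<sigma> = sin (pi / q)"
  define s where "s = sin ((2 * real Ln + 1) * pi / q)"
  have qr: "real q \<ge> 2" using q by simp
  have pq0: "0 < pi / q" using q by simp
  have pq1: "pi / q \<le> pi / 2" using qr by (intro divide_left_mono) auto
  have "pi / q < pi" using pq1 pi_gt_zero by linarith
  then have \<sigma>0: "\<sigma> > 0" unfolding \<sigma>_def using sin_gt_zero[OF pq0] by blast
  have \<sigma>1: "q * \<sigma> \<le> pi" unfolding \<sigma>_def using sin_x_le_x[of "pi / q"] pq0 qr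
    by (simp add: field_simps)
  have c0: "cos (pi / q) \<ge> 0" using pq0 pq1 by (intro cos_ge_zero) auto
  have sc: "s \<ge> cos (pi / q)"
  proof -
    define \<delta> where "\<delta> = (4 * real Ln + 2 - q) * pi / (2 * q)"
    have "(2 * real Ln + 1) * pi / q = pi / 2 + \<delta>" unfolding \<delta>_def using qr by (simp add: field_simps)
    then have "s = sin (pi / 2 + \<delta>)" unfolding s_def by simp
    also have "\<dots> = cos \<delta>" by (simp add: sin_add)
    also have "\<dots> = cos \<bar>\<delta>\<bar>" by (simp add: abs_if)
    finally have s1: "s = cos \<bar>\<delta>\<bar>" .
    have a2: "\<bar>4 * real Ln + 2 - q\<bar> \<le> 2" using L2 LLn by linarith
    have "\<bar>\<delta>\<bar> = \<bar>4 * real Ln + 2 - q\<bar> * (pi / (2 * q))" unfolding \<delta>_def using qr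
      by (simp add: abs_mult)
    also have "\<dots> \<le> 2 * (pi / (2 * q))" by (rule mult_right_mono[OF a2]) simp
    also have "\<dots> = pi / q" by simp
    finally have "\<bar>\<delta>\<bar> \<le> pi / q" .
    moreover have "pi / q \<le> pi" using pq1 pi_gt_zero by linarith
    ultimately show ?thesis unfolding s1 by (intro cos_monotone_0_pi_le) auto
  qed
  have D: "D = s / \<sigma>" using dir \<sigma>0 unfolding \<sigma>_def s_def by (simp add: field_simps)
  have "Re (Tq q) / q = 2 * s / (q * \<sigma>)" unfolding ReT D by simp
  also have "\<dots> \<ge> 2 * s / pi" using \<sigma>1 \<sigma>0 sc c0 qr
    by (intro divide_left_mono) auto
  finally have "Re (Tq q) / q \<ge> 2 * s / pi" .
  moreover have "2 * s / pi \<ge> 2 * cos (pi / q) / pi" using sc by (simp add: divide_right_mono)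
  ultimately show ?thesis by linarith
qed

lemma T_sq:
  assumes q: "q \<ge> 2"
  shows "4 / pi^2 - 4 / pi^2 * sin (pi / q)^2 \<le> (norm (Tq q) / q)^2"
proof -
  have qr: "real q \<ge> 2" using q by simp
  have pq0: "0 < pi / q" using q by simp
  have pq1: "pi / q \<le> pi / 2" using qr by (intro divide_left_mono) auto
  have c0: "cos (pi / q) \<ge> 0" using pq0 pq1 by (intro cos_ge_zero) auto
  have a: "0 \<le> 2 * cos (pi / q) / pi" using c0 by simp
  have "Re (Tq q) / q \<le> norm (Tq q) / q" by (simp add: complex_Re_le_cmod divide_right_mono)
  then have "(2 * cos (pi / q) / pi)^2 \<le> (norm (Tq q) / q)^2"
    using T_bound[OF q] a by (intro power_mono) auto
  moreover have "(2 * cos (pi / q) / pi)^2 = 4 / pi^2 - 4 / pi^2 * sin (pi / q)^2"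
  proof -
    have "(2 * cos (pi / q) / pi)^2 = 4 / pi^2 * (cos (pi / q))^2"
      by (simp add: power_divide power_mult_distrib)
    also have "\<dots> = 4 / pi^2 * (1 - (sin (pi / q))^2)" by (simp only: cos_squared_eq)
    also have "\<dots> = 4 / pi^2 - 4 / pi^2 * sin (pi / q)^2" by (simp only: right_diff_distrib mult_1_right)
    finally show ?thesis .
  qed
  ultimately show ?thesis by linarith
qed


definition ipsum :: "nat \<Rightarrow> (nat \<Rightarrow> int) \<Rightarrow> (nat \<Rightarrow> int) \<Rightarrow> int" where
  "ipsum n u a = (\<Sum>i<n. u i * a i)"

definition rr :: "nat \<Rightarrow> nat \<Rightarrow> real" where
  "rr n q = 1 / sqrt (real q ^ (n + 1))"

definition Uf :: "nat \<Rightarrow> nat \<Rightarrow> basis \<Rightarrow> basis \<Rightarrow> complex" where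
  "Uf n q y x = (case y of ((u, v), b', w') \<Rightarrow> case x of ((a, c), b, w) \<Rightarrow>
     if b' = b \<and> w' = w then complex_of_real (rr n q) * ee q (-(ipsum n u a + v * c)) else 0)"

lemma sumB:
  "(\<Sum>x\<in>qbasis n q 1. f x) = (\<Sum>a\<in>zq_vecs n q. \<Sum>c\<in>{0..<int q}. \<Sum>b\<in>UNIV. f ((a, c), b, 0))"
proof -
  have "(\<Sum>x\<in>qbasis n q 1. f x) = (\<Sum>p\<in>zq_vecs n q \<times> {0..<int q}. \<Sum>y\<in>UNIV \<times> {0..<1}. f (p, y))"
    unfolding qbasis_def by (rule sum.cartesian_product')
  also have "\<dots> = (\<Sum>p\<in>zq_vecs n q \<times> {0..<int q}. \<Sum>b\<in>UNIV. f (p, b, 0))"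
    by (simp add: sum.cartesian_product')
  also have "\<dots> = (\<Sum>a\<in>zq_vecs n q. \<Sum>c\<in>{0..<int q}. \<Sum>b\<in>UNIV. f ((a, c), b, 0))"
    by (rule sum.cartesian_product')
  finally show ?thesis .
qed

lemma sum_bool: "(\<Sum>b\<in>(UNIV::bool set). f b) = f True + f False"
  by (simp add: UNIV_bool add.commute)

lemma card_zq: "card (zq_vecs n q) = q ^ n"
  unfolding zq_vecs_def by (simp add: card_PiE)

lemma finite_zq: "finite (zq_vecs n q)"
  unfolding zq_vecs_def by (simp add: finite_PiE)

lemma rr_sq: "q > 0 \<Longrightarrow> rr n q * rr n q = 1 / real q ^ (n + 1)"
  unfolding rr_def by (simp add: real_sqrt_mult[symmetric])

lemma modeq_range:
  assumes "c \<in> {0..<int q}" "c' \<in> {0..<int q}"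
  shows "(c - c') mod int q = 0 \<longleftrightarrow> c = c'"
proof
  assume "(c - c') mod int q = 0"
  then have "c mod int q = c' mod int q" by (simp add: mod_eq_dvd_iff dvd_eq_mod_eq_0)
  moreover have "c mod int q = c" "c' mod int q = c'" using assms by auto
  ultimately show "c = c'" by simp
qed simp

lemma unitary_U:
  assumes q: "q \<ge> 2"
  shows "unitary_on (qbasis n q 1) (Uf n q)"
  unfolding unitary_on_def
proof (intro ballI)
  fix x z assume x: "x \<in> qbasis n q 1" and z: "z \<in> qbasis n q 1"
  obtain a c b where xe: "x = ((a, c), b, 0)" and a: "a \<in> zq_vecs n q" and c: "c \<in> {0..<int q}"
    using x unfolding qbasis_def by auto
  obtain a' c' b2 where ze: "z = ((a', c'), b2, 0)" and a': "a' \<in> zq_vecs n q" and c': "c' \<in> {0..<int q}"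
    using z unfolding qbasis_def by auto
  have q0: "q > 0" using q by simp
  define X where "X u v = complex_of_real (rr n q * rr n q) * (ee q (\<Sum>i<n. u i * (a i - a' i)) * ee q (v * (c - c')))" for u v
  have termeq: "cnj (Uf n q ((u, v), b', 0) x) * Uf n q ((u, v), b', 0) z = (if b' = b \<and> b' = b2 then X u v else 0)"
    for u v b'
  proof -
    have "ee q (ipsum n u a + v * c) * ee q (-(ipsum n u a' + v * c')) = ee q (\<Sum>i<n. u i * (a i - a' i)) * ee q (v * (c - c'))"
    proof -
      have "ipsum n u a + v * c + -(ipsum n u a' + v * c') = (\<Sum>i<n. u i * (a i - a' i)) + v * (c - c')"
        unfolding ipsum_def by (simp add: algebra_simps sum_subtractf)
      then show ?thesis by (metis ee_add)
    qed
    moreover define E1 where "E1 = ee q (ipsum n u a + v * c)"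
    moreover define E2 where "E2 = ee q (-(ipsum n u a' + v * c'))"
    moreover define F where "F = ee q (\<Sum>i<n. u i * (a i - a' i)) * ee q (v * (c - c'))"
    ultimately have EF: "E1 * E2 = F" by simp
    have c1: "cnj (Uf n q ((u, v), b', 0) x) = (if b' = b then complex_of_real (rr n q) * E1 else 0)"
      unfolding xe Uf_def E1_def by (simp add: ee_cnj add.commute)
    have c2: "Uf n q ((u, v), b', 0) z = (if b' = b2 then complex_of_real (rr n q) * E2 else 0)"
      unfolding ze Uf_def E2_def by simp
    have X: "X u v = complex_of_real (rr n q * rr n q) * F" unfolding X_def F_def by simp
    show ?thesis unfolding c1 c2 X using EF by (auto simp: mult_ac)
  qed
  have "(\<Sum>y\<in>qbasis n q 1. cnj (Uf n q y x) * Uf n q y z)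
      = (\<Sum>u\<in>zq_vecs n q. \<Sum>v\<in>{0..<int q}. \<Sum>b'\<in>UNIV. if b' = b \<and> b' = b2 then X u v else 0)"
    unfolding sumB termeq by simp
  also have "\<dots> = (if b = b2 then (\<Sum>u\<in>zq_vecs n q. \<Sum>v\<in>{0..<int q}. X u v) else 0)"
    by (cases b; cases b2) (simp_all add: sum_bool)
  also have "\<dots> = (if x = z then 1 else 0)"
  proof (cases "b = b2")
    case False then show ?thesis using xe ze by simp
  next
    case True
    have "(\<Sum>u\<in>zq_vecs n q. \<Sum>v\<in>{0..<int q}. X u v)
       = complex_of_real (rr n q * rr n q) * ((\<Sum>u\<in>zq_vecs n q. ee q (\<Sum>i<n. u i * (a i - a' i))) * (\<Sum>v\<in>{0..<int q}. ee q (v * (c - c'))))"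
    proof -
      define K where "K = complex_of_real (rr n q * rr n q)"
      define f where "f u = ee q (\<Sum>i<n. u i * (a i - a' i))" for u
      define g where "g v = ee q (v * (c - c'))" for v
      have "(\<Sum>u\<in>zq_vecs n q. \<Sum>v\<in>{0..<int q}. X u v) = (\<Sum>u\<in>zq_vecs n q. \<Sum>v\<in>{0..<int q}. K * (f u * g v))"
        unfolding X_def K_def f_def g_def by (rule refl)
      also have "\<dots> = K * (\<Sum>u\<in>zq_vecs n q. \<Sum>v\<in>{0..<int q}. f u * g v)"
        by (simp add: sum_distrib_left)
      also have "\<dots> = K * (sum f (zq_vecs n q) * sum g {0..<int q})"
        by (simp add: sum_product)
      finally show ?thesis unfolding K_def f_def g_def .
    qed
    also have "\<dots> = complex_of_real (rr n q * rr n q) * ((if a = a' then of_nat q ^ n else 0) * (if c = c' then of_nat q else 0))"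
      by (simp add: orth_vec[OF q0 a a'] geom_ee[OF q0] modeq_range[OF c c'])
    also have "\<dots> = (if x = z then 1 else 0)"
    proof (cases "a = a' \<and> c = c'")
      case True
      have "complex_of_real (rr n q * rr n q) * (of_nat q ^ n * of_nat q) = complex_of_real (1 / real q ^ (n + 1) * (real q ^ n * real q))"
        by (simp add: rr_sq[OF q0])
      also have "\<dots> = 1" using q0 by simp
      finally show ?thesis using True \<open>b = b2\<close> xe ze by simp
    next
      case False then show ?thesis using xe ze by auto
    qed
    finally show ?thesis using True by simp
  qed
  finally show "(\<Sum>y\<in>qbasis n q 1. cnj (Uf n q y x) * Uf n q y z) = (if x = z then 1 else 0)" .
qed


definition rho :: "nat \<Rightarrow> nat \<Rightarrow> real" where
  "rho n q = 1 / sqrt (2 * real q ^ (n + 1))"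

definition sg :: "bool \<Rightarrow> complex" where "sg b = (if b then -1 else 1)"

definition psif :: "nat \<Rightarrow> nat \<Rightarrow> basis \<Rightarrow> complex" where
  "psif n q x = (if x \<in> qbasis n q 1 then complex_of_real (rho n q) * sg (fst (snd x)) else 0)"

lemma rho_nonneg: "rho n q \<ge> 0" unfolding rho_def by simp
lemma rr_nonneg: "rr n q \<ge> 0" unfolding rr_def by simp
lemma rr_sq2: "q > 0 \<Longrightarrow> (rr n q)^2 = 1 / real q ^ (n + 1)"
  unfolding rr_def by (simp add: power_divide)
lemma rho_sq2: "q > 0 \<Longrightarrow> (rho n q)^2 = 1 / (2 * real q ^ (n + 1))"
  unfolding rho_def by (simp add: power_divide)

lemma unit_psi:
  assumes q: "q \<ge> 2"
  shows "unit_state (qbasis n q 1) (psif n q)"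
  unfolding unit_state_def
proof
  show "\<forall>x. x \<notin> qbasis n q 1 \<longrightarrow> psif n q x = 0" by (simp add: psif_def)
  have n1: "(cmod (psif n q x))^2 = (rho n q)^2" if "x \<in> qbasis n q 1" for x
  proof -
    have "cmod (psif n q x) = rho n q" using that by (simp add: psif_def sg_def norm_mult rho_nonneg)
    then show ?thesis by simp
  qed
  have "(\<Sum>x\<in>qbasis n q 1. (cmod (psif n q x))^2) = (\<Sum>x\<in>qbasis n q 1. (rho n q)^2)"
    by (rule sum.cong) (auto simp: n1)
  also have "\<dots> = real (q ^ n) * real q * 2 * (rho n q)^2"
    unfolding sumB by (simp add: sum_bool card_zq)
  also have "\<dots> = 1" using q by (simp add: rho_sq2 power_Suc)
  finally show "(\<Sum>x\<in>qbasis n q 1. (cmod (psif n q x))^2) = 1" .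
qed

lemma ee_shift_eq:
  assumes q: "q > 0"
  shows "ee q (-(ipsum n k a + (int q - 1) * c)) = ee q (c - ip_mod n q a k)"
proof -
  have "-(ipsum n k a + (int q - 1) * c) = (c - ipsum n k a) + int q * (- c)"
    by (simp add: algebra_simps)
  then have "ee q (-(ipsum n k a + (int q - 1) * c)) = ee q ((c - ipsum n k a) + int q * (- c))"
    by (rule arg_cong)
  also have "\<dots> = ee q (c - ipsum n k a) * ee q (int q * (- c))" by (rule ee_add)
  also have "\<dots> = ee q (c - ipsum n k a)" using ee_mult_q[OF q, of "- c"] by simp
  also have "\<dots> = ee q ((c - ipsum n k a) mod int q)" using ee_mod[OF q] by simp
  also have "(c - ipsum n k a) mod int q = (c - ip_mod n q a k) mod int q"
    unfolding ipsum_def ip_mod_def by (simp add: mod_diff_right_eq mult.commute)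
  also have "ee q \<dots> = ee q (c - ip_mod n q a k)" using ee_mod[OF q] by simp
  finally show ?thesis by simp
qed

lemma amp:
  assumes q: "q \<ge> 2" and k: "k \<in> zq_vecs n q"
  shows "apply_op (qbasis n q 1) (Uf n q) (dec_oracle n q k (psif n q)) ((k, int q - 1), b', 0)
       = of_nat (q ^ n) * complex_of_real (rr n q * rho n q) * sg b' * Tq q"
proof -
  have q0: "q > 0" and qi: "int q > 0" using q by auto
  have x0: "((k, int q - 1), b', 0) \<in> qbasis n q 1" using k q unfolding qbasis_def by auto
  define K where "K = complex_of_real (rr n q * rho n q)"
  define H where "H x = ee q x * Gs q x" for x
  have inner: "(\<Sum>b\<in>UNIV. Uf n q ((k, int q - 1), b', 0) ((a, c), b, 0) * dec_oracle n q k (psif n q) ((a, c), b, 0))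
      = K * sg b' * H (c - ip_mod n q a k)"
    if a: "a \<in> zq_vecs n q" and c: "c \<in> {0..<int q}" for a c
  proof -
    have mem: "((a, c), b, 0) \<in> qbasis n q 1" for b using a c unfolding qbasis_def by auto
    have sgeq: "sg (b' \<noteq> lwe_dec n q k (a, c)) = sg b' * Gs q (c - ip_mod n q a k)"
      unfolding sg_def Gs_def lwe_dec_def by auto
    have "(\<Sum>b\<in>UNIV. Uf n q ((k, int q - 1), b', 0) ((a, c), b, 0) * dec_oracle n q k (psif n q) ((a, c), b, 0))
        = complex_of_real (rr n q) * ee q (-(ipsum n k a + (int q - 1) * c)) * (complex_of_real (rho n q) * sg (b' \<noteq> lwe_dec n q k (a, c)))"
      using mem by (cases b') (simp_all add: sum_bool Uf_def dec_oracle_def psif_def)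
    also have "\<dots> = K * sg b' * H (c - ip_mod n q a k)"
      unfolding ee_shift_eq[OF q0] sgeq K_def H_def by (simp add: mult_ac)
    finally show ?thesis .
  qed
  have "apply_op (qbasis n q 1) (Uf n q) (dec_oracle n q k (psif n q)) ((k, int q - 1), b', 0)
      = (\<Sum>a\<in>zq_vecs n q. \<Sum>c\<in>{0..<int q}. K * sg b' * H (c - ip_mod n q a k))"
  proof -
    have "apply_op (qbasis n q 1) (Uf n q) (dec_oracle n q k (psif n q)) ((k, int q - 1), b', 0)
        = (\<Sum>y\<in>qbasis n q 1. Uf n q ((k, int q - 1), b', 0) y * dec_oracle n q k (psif n q) y)"
      unfolding apply_op_def using x0 by (simp only: if_True)
    also have "\<dots> = (\<Sum>a\<in>zq_vecs n q. \<Sum>c\<in>{0..<int q}. \<Sum>b\<in>UNIV. Uf n q ((k, int q - 1), b', 0) ((a, c), b, 0) * dec_oracle n q k (psif n q) ((a, c), b, 0))"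
      by (rule sumB)
    also have "\<dots> = (\<Sum>a\<in>zq_vecs n q. \<Sum>c\<in>{0..<int q}. K * sg b' * H (c - ip_mod n q a k))"
      by (intro sum.cong refl inner) 
    finally show ?thesis .
  qed
  also have "\<dots> = (\<Sum>a\<in>zq_vecs n q. K * sg b' * Tq q)"
  proof (rule sum.cong)
    fix a assume "a \<in> zq_vecs n q"
    have per: "H (x mod int q) = H x" for x
      unfolding H_def Gs_def using ee_mod[OF q0] by (simp add: cabs_mod)
    have "(\<Sum>c\<in>{0..<0 + int q}. H (c + - ip_mod n q a k)) = (\<Sum>c\<in>{0..<int q}. H c)"
      by (rule sum_mod_shift[OF qi, where H = H]) (rule per)
    then show "(\<Sum>c\<in>{0..<int q}. K * sg b' * H (c - ip_mod n q a k)) = K * sg b' * Tq q"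
      unfolding Tq_def H_def by (simp add: sum_distrib_left[symmetric])
  qed simp
  also have "\<dots> = of_nat (q ^ n) * K * sg b' * Tq q"
    by (simp add: card_zq)
  finally show ?thesis unfolding K_def .
qed

lemma amp_sq:
  assumes q: "q \<ge> 2" and k: "k \<in> zq_vecs n q"
  shows "(cmod (apply_op (qbasis n q 1) (Uf n q) (dec_oracle n q k (psif n q)) ((k, int q - 1), b', 0)))^2
       = (cmod (Tq q))^2 / (2 * real q ^ 2)"
proof -
  have q0: "real q > 0" using q by simp
  have "cmod (of_nat (q ^ n) * complex_of_real (rr n q * rho n q) * sg b' * Tq q)
      = real q ^ n * (rr n q * rho n q) * cmod (Tq q)"
    by (simp add: norm_mult sg_def rr_nonneg rho_nonneg norm_power)
  then have "(cmod (of_nat (q ^ n) * complex_of_real (rr n q * rho n q) * sg b' * Tq q))^2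
      = (real q ^ n)^2 * (rr n q)^2 * (rho n q)^2 * (cmod (Tq q))^2"
    by (simp add: power_mult_distrib)
  also have "\<dots> = (real q ^ n)^2 * (1 / real q ^ (n + 1)) * (1 / (2 * real q ^ (n + 1))) * (cmod (Tq q))^2"
    using q by (simp add: rr_sq2 rho_sq2)
  also have "(real q ^ n)^2 * (1 / real q ^ (n + 1)) * (1 / (2 * real q ^ (n + 1))) = 1 / (2 * real q ^ 2)"
  proof -
    define A where "A = real q ^ n"
    have A0: "A > 0" unfolding A_def using q0 by simp
    have e: "real q ^ (n + 1) = A * real q" unfolding A_def by simp
    show ?thesis unfolding e A_def[symmetric] using A0 q0 by (simp add: field_simps power2_eq_square)
  qed
  finally show ?thesis unfolding amp[OF q k] by simp
qed


lemma finite_qbasis: "finite (qbasis n q m)"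
  unfolding qbasis_def by (simp add: finite_zq)

lemma eps_lim: "(\<lambda>q::nat. 4 / pi^2 * sin (pi / real q)^2) \<longlonglongrightarrow> 0"
proof -
  have "(\<lambda>q::nat. pi / of_nat q) \<longlonglongrightarrow> 0" by (rule lim_const_over_n)
  then have "(\<lambda>q::nat. sin (pi / real q)) \<longlonglongrightarrow> sin 0" by (intro tendsto_sin) simp
  then have "(\<lambda>q::nat. sin (pi / real q)^2) \<longlonglongrightarrow> (sin 0)^2" by (rule tendsto_power)
  then have "(\<lambda>q::nat. 4 / pi^2 * sin (pi / real q)^2) \<longlonglongrightarrow> 4 / pi^2 * (sin 0)^2"
    by (intro tendsto_mult tendsto_const)
  then show ?thesis by simp
qed

lemma success:
  assumes q: "q \<ge> 2" and k: "k \<in> zq_vecs n q"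
  shows "success_prob n q 1 (psif n q) (Uf n q) (\<lambda>x. fst (fst x)) k \<ge> 4 / pi^2 - 4 / pi^2 * sin (pi / real q)^2"
proof -
  define f where "f x = (cmod (apply_op (qbasis n q 1) (Uf n q) (dec_oracle n q k (psif n q)) x))^2" for x
  define h where "h b = (((k, int q - 1), b, 0) :: basis)" for b
  have sub: "h ` UNIV \<subseteq> {x \<in> qbasis n q 1. fst (fst x) = k}"
    using k q unfolding h_def qbasis_def by auto
  have inj: "inj h" unfolding h_def inj_def by simp
  have "(\<Sum>x\<in>h ` UNIV. f x) = (\<Sum>b\<in>UNIV. f (h b))"
    using inj by (simp add: sum.reindex)
  also have "\<dots> = (cmod (Tq q))^2 / (2 * real q ^ 2) + (cmod (Tq q))^2 / (2 * real q ^ 2)"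
    unfolding sum_bool f_def h_def using amp_sq[OF q k] by simp
  also have "\<dots> = (cmod (Tq q) / real q)^2" by (simp add: power_divide)
  finally have e: "(\<Sum>x\<in>h ` UNIV. f x) = (cmod (Tq q) / real q)^2" .
  have "(\<Sum>x\<in>h ` UNIV. f x) \<le> (\<Sum>x\<in>{x \<in> qbasis n q 1. fst (fst x) = k}. f x)"
  proof (rule sum_mono2[OF _ sub])
    show "finite {x \<in> qbasis n q 1. fst (fst x) = k}" using finite_qbasis by simp
  qed (simp add: f_def)
  moreover have sp: "success_prob n q 1 (psif n q) (Uf n q) (\<lambda>x. fst (fst x)) k = (\<Sum>x\<in>{x \<in> qbasis n q 1. fst (fst x) = k}. f x)"
    unfolding success_prob_def f_def by simp
  ultimately show ?thesis using T_sq[OF q] e by linarith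
qed

theorem corollary1:
  shows "\<exists>\<epsilon> :: nat \<Rightarrow> real. (\<epsilon> \<longlonglongrightarrow> 0) \<and>
     (\<forall>n q. n \<ge> 1 \<longrightarrow> q \<ge> 2 \<longrightarrow>
       (\<exists>m \<psi> U out. unit_state (qbasis n q m) \<psi> \<and> unitary_on (qbasis n q m) U \<and>
          (\<forall>k \<in> zq_vecs n q. success_prob n q m \<psi> U out k \<ge> 4 / pi^2 - \<epsilon> q)))"
proof (rule exI[of _ "\<lambda>q::nat. 4 / pi^2 * sin (pi / real q)^2"], rule conjI)
  show "(\<lambda>q::nat. 4 / pi^2 * sin (pi / real q)^2) \<longlonglongrightarrow> 0" by (rule eps_lim)
next
  show "\<forall>n q. n \<ge> 1 \<longrightarrow> q \<ge> 2 \<longrightarrow>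
       (\<exists>m \<psi> U out. unit_state (qbasis n q m) \<psi> \<and> unitary_on (qbasis n q m) U \<and>
          (\<forall>k \<in> zq_vecs n q. success_prob n q m \<psi> U out k \<ge> 4 / pi^2 - 4 / pi^2 * sin (pi / real q)^2))"
  proof (intro allI impI)
  fix n q :: nat assume "n \<ge> 1" and q: "q \<ge> 2"
  show "\<exists>m \<psi> U out. unit_state (qbasis n q m) \<psi> \<and> unitary_on (qbasis n q m) U \<and>
          (\<forall>k \<in> zq_vecs n q. success_prob n q m \<psi> U out k \<ge> 4 / pi^2 - 4 / pi^2 * sin (pi / real q)^2)"
    using unit_psi[OF q] unitary_U[OF q] success[OF q] by blast
  qed
qed

end
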